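(* Let $d\ge1$, $\gamma\in\mathbb N_0^d$ and $\tau<0$. For functions $\varphi$ on $\mathbb N_0^d\times\mathbb R_-$ define $$(S_{\gamma,\tau}\varphi)(\alpha,\lambda)=\begin{cases}\frac{|\lambda-\tau|^d}{|\lambda|^d}\varphi(\alpha-\gamma,\lambda-\tau)&\text{if }\lambda<\tau\text{ and }\alpha\ge\gamma,\\ 0&\text{otherwise.}\end{cases}$$ Then $S_{\gamma,\tau}$ extends to a bounded linear operator on $L^2(\mathbb N_0^d\times\mathbb R_-,d\mu)$ which is unitarily equivalent (via the map $\mathscr S$) to the multiplier operator $f\mapsto \zeta^\gamma e^{-i\tau\zeta_{d+1}}f$ on $DA$. Moreover its adjoint is given by $$(S^*_{\gamma,\tau}\varphi)(\alpha,\lambda)=\frac{|\lambda+\tau|^{d-|\alpha|-|\gamma|}}{|\lambda|^{d-|\alpha|}}\,\frac{(\alpha+\gamma)!}{\alpha!}\,2^{|\gamma|}\,\varphi(\alpha+\gamma,\lambda+\tau).$$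
   Context: $\alpha\ge\gamma$ means $\alpha_i\ge\gamma_i$ for all $i$. $d\mu(\alpha,\lambda)=\alpha!(2/|\lambda|)^{|\alpha|}|\lambda|^{2d}\,d\alpha\,d\lambda$ on $\mathbb N_0^d\times(-\infty,0)$ ($d\alpha$ counting measure). $\mathcal U=\{(\zeta,\zeta_{d+1})\in\mathbb C^d\times\mathbb C:\operatorname{Im}\zeta_{d+1}>\frac14|\zeta|^2\}$, $\rho=\operatorname{Im}\zeta_{d+1}-\frac14|\zeta|^2$; $DA$ is the space of holomorphic $F$ on $\mathcal U$ tending to $0$ as $\operatorname{Im}\zeta_{d+1}\to\infty$ uniformly on $\{|\zeta|\le R\}$ for each $R$, with $\int_{\mathcal U}|\rho^n\partial^n_{\zeta_{d+1}}F|^2\rho^{-d-1}dV<\infty$ for a fixed integer $n>d/2$ (square norm). $\mathscr S: L^2(d\mu)\to DA$ is $(\mathscr S\varphi)(\zeta,\zeta_{d+1})=(2\pi)^{-d-1}\int\zeta^\alpha e^{-i\lambda\zeta_{d+1}}\overline{\varphi(\alpha,\lambda)}|\lambda|^d\,d\alpha\,d\lambda$, a conjugate-linear bijection which is isometric up to a constant factor. *)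

theory Defs
  imports "HOL-Analysis.Analysis"
begin

text \<open>Multi-indices alpha in N_0^d are modelled as nat^'n, with d = CARD('n).  Functions on N_0^d x R_- are functions
  on (nat^'n) x real (values for lambda >= 0 are irrelevant: the measures vanish there).\<close>

definition mi_abs :: "nat^'n \<Rightarrow> nat" where
  "mi_abs a = (\<Sum>i\<in>UNIV. a $ i)"

definition mi_fact :: "nat^'n \<Rightarrow> nat" where
  "mi_fact a = (\<Prod>i\<in>UNIV. fact (a $ i))"

definition mi_le :: "nat^'n \<Rightarrow> nat^'n \<Rightarrow> bool" where
  "mi_le g a \<longleftrightarrow> (\<forall>i. g $ i \<le> a $ i)"

definition mi_pow :: "complex^'n \<Rightarrow> nat^'n \<Rightarrow> complex" where
  "mi_pow z a = (\<Prod>i\<in>UNIV. (z $ i) ^ (a $ i))"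

definition sqnorm_c :: "complex^'n \<Rightarrow> real" where
  "sqnorm_c z = (\<Sum>i\<in>UNIV. (cmod (z $ i))^2)"

definition siegel :: "((complex^'n) \<times> complex) set" where
  "siegel = {(z, w). Im w > sqnorm_c z / 4}"

definition mu_weight :: "(nat^'n) \<times> real \<Rightarrow> real" where
  "mu_weight p = (case p of (a, l) \<Rightarrow>
     if l < 0 then real (mi_fact a) * (2 / \<bar>l\<bar>) ^ mi_abs a * \<bar>l\<bar> ^ (2 * CARD('n)) else 0)"

definition base_measure :: "((nat^'n) \<times> real) measure" where
  "base_measure = count_space UNIV \<Otimes>\<^sub>M lborel"

definition mu :: "((nat^'n) \<times> real) measure" where
  "mu = density base_measure (\<lambda>p. ennreal (mu_weight p))"

definition L2mu :: "((nat^'n) \<times> real \<Rightarrow> complex) set" where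
  "L2mu = {f. f \<in> borel_measurable mu \<and> integrable mu (\<lambda>p. (cmod (f p))^2)}"

definition L2norm :: "((nat^'n) \<times> real \<Rightarrow> complex) \<Rightarrow> real" where
  "L2norm f = sqrt (\<integral>p. (cmod (f p))^2 \<partial>mu)"

definition L2inner :: "((nat^'n) \<times> real \<Rightarrow> complex) \<Rightarrow> ((nat^'n) \<times> real \<Rightarrow> complex) \<Rightarrow> complex" where
  "L2inner f g = (\<integral>p. f p * cnj (g p) \<partial>mu)"

definition scrS :: "((nat^'n) \<times> real \<Rightarrow> complex) \<Rightarrow> (complex^'n) \<times> complex \<Rightarrow> complex" where
  "scrS f = (\<lambda>(z, w). (2 * pi) powr (- real CARD('n) - 1) *
     (\<integral>p. (case p of (a, l) \<Rightarrow>
        (if l < 0 then mi_pow z a * exp (- \<i> * of_real l * w) * cnj (f (a, l)) * of_real (\<bar>l\<bar> ^ CARD('n))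
         else 0)) \<partial>base_measure))"

definition Sop :: "nat^'n \<Rightarrow> real \<Rightarrow> ((nat^'n) \<times> real \<Rightarrow> complex) \<Rightarrow> (nat^'n) \<times> real \<Rightarrow> complex" where
  "Sop g t f = (\<lambda>(a, l). if l < t \<and> mi_le g a
      then of_real (\<bar>l - t\<bar> ^ CARD('n) / \<bar>l\<bar> ^ CARD('n)) * f (a - g, l - t)
      else 0)"

definition Sadj :: "nat^'n \<Rightarrow> real \<Rightarrow> ((nat^'n) \<times> real \<Rightarrow> complex) \<Rightarrow> (nat^'n) \<times> real \<Rightarrow> complex" where
  "Sadj g t f = (\<lambda>(a, l).
      of_real (\<bar>l + t\<bar> powr (real CARD('n) - real (mi_abs a) - real (mi_abs g))
               / \<bar>l\<bar> powr (real CARD('n) - real (mi_abs a))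
               * (real (mi_fact (a + g)) / real (mi_fact a)) * 2 ^ mi_abs g)
      * f (a + g, l + t))"

end

theory Submission
  imports Defs
begin


lemma base_meas_map:
  fixes \<phi> :: "nat^'n \<Rightarrow> nat^'n" and c :: real
  shows "(\<lambda>p. (\<phi> (fst p), snd p + c)) \<in> measurable (base_measure::((nat^'n) \<times> real) measure) base_measure"
  unfolding base_measure_def
proof (rule measurable_Pair)
  show "(\<lambda>p. \<phi> (fst p)) \<in> measurable (count_space UNIV \<Otimes>\<^sub>M lborel) (count_space UNIV)"
    using measurable_comp[OF measurable_fst, of \<phi>] by (simp add: o_def)
  show "(\<lambda>p. snd p + c) \<in> measurable (count_space UNIV \<Otimes>\<^sub>M lborel) lborel"
    by measurable
qed

lemma vec_add_sub_nat: "((b::nat^'n) + g) - g = b"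
  by (simp add: vec_eq_iff)

lemma bij_shift: "bij_betw (\<lambda>a::nat^'n. a + g) UNIV {a. mi_le g a}"
proof (rule bij_betwI[where g="\<lambda>a. a - g"])
  show "(\<lambda>a. a + g) \<in> UNIV \<rightarrow> {a. mi_le g a}" by (auto simp: mi_le_def)
  show "(\<lambda>a. a - g) \<in> {a. mi_le g a} \<rightarrow> UNIV" by auto
  show "\<And>x. x \<in> UNIV \<Longrightarrow> x + g - g = x" by (simp add: vec_eq_iff)
  show "\<And>y. y \<in> {a. mi_le g a} \<Longrightarrow> y - g + g = y" by (auto simp: vec_eq_iff mi_le_def)
qed

lemma key_nn:
  fixes g :: "nat^'n" and t :: real
  assumes F[measurable]: "F \<in> borel_measurable (base_measure::((nat^'n) \<times> real) measure)"
  shows "(\<integral>\<^sup>+q. F (fst q + g, snd q + t) \<partial>base_measure)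
       = (\<integral>\<^sup>+p. F p * indicator {p. mi_le g (fst p)} p \<partial>base_measure)"
proof -
  have Fp: "F \<in> borel_measurable (count_space UNIV \<Otimes>\<^sub>M lborel)" using F by (simp add: base_measure_def)
  have FT: "(\<lambda>q. F (fst q + g, snd q + t)) \<in> borel_measurable (count_space UNIV \<Otimes>\<^sub>M lborel)"
    using measurable_comp[OF base_meas_map[of "\<lambda>a. a + g" t] F] by (simp add: o_def base_measure_def)
  have FI: "(\<lambda>p. F p * indicator {p. mi_le g (fst p)} p) \<in> borel_measurable (count_space UNIV \<Otimes>\<^sub>M lborel)"
  proof -
    have "(\<lambda>p. indicator {p. mi_le g (fst p)} p :: ennreal) = (\<lambda>p. indicator {a. mi_le g a} (fst p))"
      by (auto simp: indicator_def)
    moreover have "(\<lambda>p. indicator {a. mi_le g a} (fst p) :: ennreal) \<in> borel_measurable (count_space UNIV \<Otimes>\<^sub>M lborel)"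
      using measurable_comp[OF measurable_fst, of "indicator {a. mi_le g a} :: _ \<Rightarrow> ennreal"] by (simp add: o_def)
    ultimately show ?thesis using Fp by (simp add: borel_measurable_times_ennreal)
  qed
  define G where "G a = (\<integral>\<^sup>+l. F (a, l) \<partial>lborel)" for a
  have inner: "(\<integral>\<^sup>+m. F (a + g, m + t) \<partial>lborel) = G (a + g)" for a
  proof -
    have m: "(\<lambda>l. F (a + g, l)) \<in> borel_measurable borel"
      using measurable_Pair2[OF Fp, of "a+g"] by simp
    show ?thesis unfolding G_def
      using nn_integral_real_affine[OF m, of 1 t] by (simp add: add.commute)
  qed
  have "(\<integral>\<^sup>+q. F (fst q + g, snd q + t) \<partial>base_measure)
      = (\<integral>\<^sup>+a. \<integral>\<^sup>+m. F (a + g, m + t) \<partial>lborel \<partial>count_space UNIV)"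
    unfolding base_measure_def using lborel.nn_integral_fst[OF FT] by simp
  also have "\<dots> = (\<integral>\<^sup>+a. G (a + g) \<partial>count_space UNIV)" by (simp add: inner)
  also have "\<dots> = (\<integral>\<^sup>+a. G a \<partial>count_space {a. mi_le g a})"
    by (rule nn_integral_bij_count_space[OF bij_shift])
  also have "\<dots> = (\<integral>\<^sup>+a. G a * indicator {a. mi_le g a} a \<partial>count_space UNIV)"
    by (rule nn_integral_count_space_indicator) simp
  also have "\<dots> = (\<integral>\<^sup>+a. \<integral>\<^sup>+l. F (a, l) * indicator {p. mi_le g (fst p)} (a, l) \<partial>lborel \<partial>count_space UNIV)"
  proof (rule nn_integral_cong)
    fix a
    have m: "(\<lambda>l. F (a, l)) \<in> borel_measurable lborel"
      using measurable_Pair2[OF Fp, of "a"] by simp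
    have e: "indicator {p. mi_le g (fst p)} (a, l) = (indicator {a. mi_le g a} a :: ennreal)" for l
      by (auto simp: indicator_def)
    show "G a * indicator {a. mi_le g a} a = (\<integral>\<^sup>+l. F (a, l) * indicator {p. mi_le g (fst p)} (a, l) \<partial>lborel)"
      unfolding G_def e using nn_integral_multc[OF m] by simp
  qed
  also have "\<dots> = (\<integral>\<^sup>+p. F p * indicator {p. mi_le g (fst p)} p \<partial>base_measure)"
    unfolding base_measure_def using lborel.nn_integral_fst[OF FI] by simp
  finally show ?thesis .
qed

lemma meas_base:
  assumes "\<And>a. (\<lambda>l. f (a, l)) \<in> borel_measurable borel"
  shows "f \<in> borel_measurable (base_measure::((nat^'n) \<times> real) measure)"
  unfolding base_measure_def
  by (rule measurable_pair_measure_countable1) (use assms in auto)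

lemma meas_slice:
  assumes "f \<in> borel_measurable (base_measure::((nat^'n) \<times> real) measure)"
  shows "(\<lambda>l. f (a, l)) \<in> borel_measurable borel"
  using measurable_Pair2[of f "count_space UNIV" lborel borel a] assms
  by (simp add: base_measure_def)

lemma R_sets: "{p. mi_le g (fst p)} \<in> sets (base_measure::((nat^'n) \<times> real) measure)"
proof -
  have "(\<lambda>p. indicator {p. mi_le g (fst p)} p :: real) \<in> borel_measurable (base_measure::((nat^'n) \<times> real) measure)"
    by (rule meas_base) (simp add: indicator_def)
  then have "{p. mi_le g (fst p)} \<inter> space (base_measure::((nat^'n) \<times> real) measure) \<in> sets base_measure"
    by (simp only: borel_measurable_indicator_iff)
  then show ?thesis by (simp add: base_measure_def space_pair_measure)
qed

lemma distr_T:
  fixes g :: "nat^'n" and t :: real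
  shows "distr base_measure base_measure (\<lambda>q. (fst q + g, snd q + t))
     = density base_measure (\<lambda>p. ennreal (indicator {p. mi_le g (fst p)} p))"
proof (rule measure_eqI)
  show "sets (distr base_measure base_measure (\<lambda>q. (fst q + g, snd q + t))) =
    sets (density (base_measure::((nat^'n) \<times> real) measure) (\<lambda>p. ennreal (indicator {p. mi_le g (fst p)} p)))"
    by simp
  fix A assume "A \<in> sets (distr base_measure base_measure (\<lambda>q. (fst q + g, snd q + t)))"
  then have A: "A \<in> sets (base_measure::((nat^'n) \<times> real) measure)" by simp
  have Tm: "(\<lambda>q. (fst q + g, snd q + t)) \<in> measurable (base_measure::((nat^'n) \<times> real) measure) base_measure"
    using base_meas_map[of "\<lambda>a. a + g" t] .
  have "emeasure (distr base_measure base_measure (\<lambda>q. (fst q + g, snd q + t))) A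
     = (\<integral>\<^sup>+q. indicator A (fst q + g, snd q + t) \<partial>base_measure)"
  proof -
    have S: "(\<lambda>q. (fst q + g, snd q + t)) -` A \<inter> space base_measure \<in> sets base_measure"
      using measurable_sets[OF Tm A] .
    have "emeasure (distr base_measure base_measure (\<lambda>q. (fst q + g, snd q + t))) A
       = emeasure base_measure ((\<lambda>q. (fst q + g, snd q + t)) -` A \<inter> space base_measure)"
      by (rule emeasure_distr[OF Tm A])
    also have "\<dots> = (\<integral>\<^sup>+q. indicator ((\<lambda>q. (fst q + g, snd q + t)) -` A \<inter> space base_measure) q \<partial>base_measure)"
      by (rule nn_integral_indicator[OF S, symmetric])
    also have "\<dots> = (\<integral>\<^sup>+q. indicator A (fst q + g, snd q + t) \<partial>base_measure)"
      by (rule nn_integral_cong) (simp add: indicator_def base_measure_def space_pair_measure)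
    finally show ?thesis .
  qed
  also have "\<dots> = (\<integral>\<^sup>+p. indicator A p * indicator {p. mi_le g (fst p)} p \<partial>base_measure)"
    by (rule key_nn) (use A in simp)
  also have "\<dots> = emeasure (density base_measure (\<lambda>p. ennreal (indicator {p. mi_le g (fst p)} p))) A"
  proof -
    have "(\<integral>\<^sup>+p. indicator A p * indicator {p. mi_le g (fst p)} p \<partial>base_measure)
        = (\<integral>\<^sup>+p. ennreal (indicator {p. mi_le g (fst p)} p) * indicator A p \<partial>base_measure)"
      by (rule nn_integral_cong) (simp add: indicator_def)
    also have "\<dots> = emeasure (density base_measure (\<lambda>p. ennreal (indicator {p. mi_le g (fst p)} p))) A"
      by (rule emeasure_density[symmetric]) (use A borel_measurable_indicator[OF R_sets] in auto)
    finally show ?thesis .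
  qed
  finally show "emeasure (distr base_measure base_measure (\<lambda>q. (fst q + g, snd q + t))) A =
         emeasure (density base_measure (\<lambda>p. ennreal (indicator {p. mi_le g (fst p)} p))) A" .
qed

lemma int_T:
  fixes F :: "(nat^'n) \<times> real \<Rightarrow> 'b::{banach, second_countable_topology}"
  assumes F: "F \<in> borel_measurable base_measure"
  shows "integral\<^sup>L base_measure (\<lambda>q. F (fst q + g, snd q + t))
       = integral\<^sup>L base_measure (\<lambda>p. indicator {p. mi_le g (fst p)} p *\<^sub>R F p)"
    and "integrable base_measure (\<lambda>q. F (fst q + g, snd q + t))
       \<longleftrightarrow> integrable base_measure (\<lambda>p. indicator {p. mi_le g (fst p)} p *\<^sub>R F p)"
proof -
  have Tm: "(\<lambda>q. (fst q + g, snd q + t)) \<in> measurable (base_measure::((nat^'n) \<times> real) measure) base_measure"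
    using base_meas_map[of "\<lambda>a. a + g" t] .
  have I: "(\<lambda>p. indicator {p. mi_le g (fst p)} p :: real) \<in> borel_measurable (base_measure::((nat^'n) \<times> real) measure)"
    using borel_measurable_indicator[OF R_sets] .
  show "integral\<^sup>L base_measure (\<lambda>q. F (fst q + g, snd q + t))
       = integral\<^sup>L base_measure (\<lambda>p. indicator {p. mi_le g (fst p)} p *\<^sub>R F p)"
    using integral_distr[OF Tm F, symmetric] integral_density[OF F I] distr_T[of g t]
    by simp
  show "integrable base_measure (\<lambda>q. F (fst q + g, snd q + t))
       \<longleftrightarrow> integrable base_measure (\<lambda>p. indicator {p. mi_le g (fst p)} p *\<^sub>R F p)"
    using integrable_distr_eq[OF Tm F, symmetric] integrable_density[OF F I] distr_T[of g t]
    by simp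
qed

lemma W_meas: "mu_weight \<in> borel_measurable (base_measure::((nat^'n) \<times> real) measure)"
  by (rule meas_base) (simp add: mu_weight_def)

lemma W_nonneg: "0 \<le> mu_weight p"
  by (auto simp: mu_weight_def split: prod.splits)

lemma mu_facts:
  fixes f :: "(nat^'n) \<times> real \<Rightarrow> 'b::{banach, second_countable_topology}"
  assumes f: "f \<in> borel_measurable base_measure"
  shows "integral\<^sup>L mu f = integral\<^sup>L base_measure (\<lambda>p. mu_weight p *\<^sub>R f p)"
    and "integrable mu f \<longleftrightarrow> integrable base_measure (\<lambda>p. mu_weight p *\<^sub>R f p)"
  unfolding mu_def
proof -
  have ae: "AE x in base_measure. 0 \<le> mu_weight x" by (rule AE_I2) (rule W_nonneg)
  show "integral\<^sup>L (density base_measure (\<lambda>p. ennreal (mu_weight p))) f = integral\<^sup>L base_measure (\<lambda>p. mu_weight p *\<^sub>R f p)"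
    using integral_density[OF f W_meas ae] .
  show "integrable (density base_measure (\<lambda>p. ennreal (mu_weight p))) f \<longleftrightarrow> integrable base_measure (\<lambda>p. mu_weight p *\<^sub>R f p)"
    using integrable_density[OF f W_meas ae] .
qed

lemma sets_mu: "sets mu = sets base_measure"
  by (simp add: mu_def)

lemma meas_mu: "measurable mu M = measurable base_measure M"
  by (rule measurable_cong_sets[OF sets_mu refl])



lemma coord_bound:
  fixes x c :: real assumes x: "x > 0" and c: "c > 0"
  shows "fact (a + b) / fact a * x ^ a / (x + c) ^ (a + b) \<le> fact b / c ^ b"
proof -
  have "of_nat ((a + b) choose a) * x ^ a * c ^ (a + b - a) \<le> (\<Sum>k\<le>a+b. of_nat ((a + b) choose k) * x ^ k * c ^ (a + b - k))"
    by (rule member_le_sum) (use x c in auto)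
  also have "\<dots> = (x + c) ^ (a + b)" by (rule binomial_ring[symmetric])
  finally have B: "of_nat ((a + b) choose a) * x ^ a * c ^ b \<le> (x + c) ^ (a + b)" by simp
  have F: "fact (a + b) / fact a = of_nat ((a + b) choose a) * (fact b :: real)"
    by (simp add: binomial_fact field_simps)
  have pos: "0 < of_nat ((a + b) choose a) * x ^ a * c ^ b" using x c by simp
  have "fact (a + b) / fact a * x ^ a / (x + c) ^ (a + b)
      = fact b * (of_nat ((a + b) choose a) * x ^ a) / (x + c) ^ (a + b)" by (simp add: F)
  also have "\<dots> \<le> fact b * (of_nat ((a + b) choose a) * x ^ a) / (of_nat ((a + b) choose a) * x ^ a * c ^ b)"
    by (rule divide_left_mono[OF B]) (use x c pos in \<open>auto intro!: mult_pos_pos mult_nonneg_nonneg\<close>)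
  also have "\<dots> = fact b / c ^ b" using pos x c by (simp add: field_simps)
  finally show ?thesis .
qed

lemma mi_abs_add: "mi_abs (b + g) = mi_abs b + mi_abs (g::nat^'n)"
  by (simp add: mi_abs_def sum.distrib)

lemma mi_pow_add: "mi_pow z (b + g) = mi_pow z b * mi_pow z (g::nat^'n)"
  by (simp add: mi_pow_def power_add prod.distrib)

lemma mi_fact_pos: "mi_fact a > 0"
  by (simp add: mi_fact_def)

lemma K_bound:
  fixes x c :: real and b g :: "nat^'n" assumes x: "x > 0" and c: "c > 0"
  shows "real (mi_fact (b + g)) / real (mi_fact b) * x ^ mi_abs b / (x + c) ^ (mi_abs b + mi_abs g)
     \<le> real (mi_fact g) / c ^ mi_abs g"
proof -
  have "real (mi_fact (b + g)) / real (mi_fact b) * x ^ mi_abs b / (x + c) ^ (mi_abs b + mi_abs g)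
     = (\<Prod>i\<in>UNIV. fact (b$i + g$i) / fact (b$i) * x ^ (b$i) / (x + c) ^ (b$i + g$i))"
    by (simp add: mi_fact_def mi_abs_def of_nat_prod prod_dividef power_sum prod.distrib
        sum.distrib[symmetric] power_add)
  also have "\<dots> \<le> (\<Prod>i\<in>UNIV. fact (g$i) / c ^ (g$i))"
    by (rule prod_mono) (use x c coord_bound in auto)
  also have "\<dots> = real (mi_fact g) / c ^ mi_abs g"
    by (simp add: mi_fact_def mi_abs_def of_nat_prod prod_dividef power_sum)
  finally show ?thesis .
qed

definition Kf :: "nat^'n \<Rightarrow> real \<Rightarrow> (nat^'n) \<times> real \<Rightarrow> real" where
  "Kf g t q = (if snd q < 0 then real (mi_fact (fst q + g)) / real (mi_fact (fst q)) * 2 ^ mi_abs g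
      * (- snd q) ^ mi_abs (fst q) / (- snd q - t) ^ (mi_abs (fst q) + mi_abs g) else 0)"

lemma Kf_bounds:
  assumes t: "t < 0"
  shows "0 \<le> Kf g t q" "Kf g t q \<le> 2 ^ mi_abs g * real (mi_fact g) / (- t) ^ mi_abs g"
proof -
  obtain b m where q: "q = (b, m)" by (cases q)
  show "0 \<le> Kf g t q" using t by (auto simp: Kf_def q)
  show "Kf g t q \<le> 2 ^ mi_abs g * real (mi_fact g) / (- t) ^ mi_abs g"
  proof (cases "m < 0")
    case True
    have "real (mi_fact (b + g)) / real (mi_fact b) * (- m) ^ mi_abs b / (- m + - t) ^ (mi_abs b + mi_abs g)
       \<le> real (mi_fact g) / (- t) ^ mi_abs g"
      by (rule K_bound) (use True t in auto)
    then have "2 ^ mi_abs g * (real (mi_fact (b + g)) / real (mi_fact b) * (- m) ^ mi_abs b / (- m + - t) ^ (mi_abs b + mi_abs g))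
       \<le> 2 ^ mi_abs g * (real (mi_fact g) / (- t) ^ mi_abs g)"
      by (rule mult_left_mono) simp
    then show ?thesis using True by (simp add: Kf_def q algebra_simps)
  next
    case False then show ?thesis using t by (simp add: Kf_def q)
  qed
qed

lemma Kf_meas: "Kf g t \<in> borel_measurable base_measure"
  by (rule meas_base, unfold Kf_def fst_conv snd_conv, measurable)

lemma Sop_T:
  fixes b g :: "nat^'n"
  assumes t: "t < 0"
  shows "Sop g t f (b + g, m + t) = (if m < 0 then of_real ((- m) ^ CARD('n) / (- m - t) ^ CARD('n)) * f (b, m) else 0)"
  using t by (auto simp: Sop_def mi_le_def vec_add_sub_nat)

lemma W_pos: fixes b :: "nat^'n" shows "m < 0 \<Longrightarrow> mu_weight (b, m) = real (mi_fact b) * (2 / (- m)) ^ mi_abs b * (- m) ^ (2 * CARD('n))"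
  by (simp add: mu_weight_def)

lemma W_neg: fixes b :: "nat^'n" shows "\<not> m < 0 \<Longrightarrow> mu_weight (b, m) = 0"
  by (simp add: mu_weight_def)

lemma alg1:
  fixes x y F F' N :: real and n k d :: nat
  assumes "x > 0" "y > 0" "F > 0"
  shows "F' * (2 / y) ^ (n + k) * y ^ (2 * d) * (x ^ d / y ^ d) ^ 2 * N
    = (F' / F * 2 ^ k * x ^ n / y ^ (n + k)) * (F * (2 / x) ^ n * x ^ (2 * d) * N)"
  using assms by (simp add: field_simps power_add power_mult_distrib power_divide power_mult power2_eq_square mult_ac)

lemma alg3:
  fixes x y F F' N :: real and n k d :: nat
  assumes "x > 0" "y > 0" "F > 0"
  shows "F * (2 / x) ^ n * x ^ (2 * d) * ((y ^ d / y ^ (n + k)) / (x ^ d / x ^ n) * (F' / F) * 2 ^ k) ^ 2 * N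
    = (F' / F * 2 ^ k * x ^ n / y ^ (n + k)) * (F' * (2 / y) ^ (n + k) * y ^ (2 * d) * N)"
  using assms by (simp add: field_simps power_add power_mult_distrib power_divide power_mult power2_eq_square mult_ac)

lemma alg_inner:
  fixes x y F F' :: real and n k d :: nat
  assumes "x > 0" "y > 0" "F > 0"
  shows "F' * (2 / y) ^ (n + k) * y ^ (2 * d) * (x ^ d / y ^ d)
    = F * (2 / x) ^ n * x ^ (2 * d) * ((y ^ d / y ^ (n + k)) / (x ^ d / x ^ n) * (F' / F) * 2 ^ k)"
  using assms by (simp add: field_simps power_add power_mult_distrib power_divide power_mult power2_eq_square mult_ac)

lemma powr_nat_diff: "y > 0 \<Longrightarrow> y powr (real d - real n) = y ^ d / (y::real) ^ n"
  by (simp add: powr_diff powr_realpow)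

lemma W1:
  fixes b g :: "nat^'n"
  assumes "m < 0" "t < 0"
  shows "mu_weight (b + g, m + t) = real (mi_fact (b + g)) * (2 / (- m - t)) ^ (mi_abs b + mi_abs g) * (- m - t) ^ (2 * CARD('n))"
  using W_pos[of "m + t" "b + g"] assms by (simp add: mi_abs_add)

lemma pw1:
  fixes b g :: "nat^'n"
  assumes t: "t < 0"
  shows "mu_weight (b + g, m + t) * (cmod (Sop g t f (b + g, m + t)))^2
       = Kf g t (b, m) * (mu_weight (b, m) * (cmod (f (b, m)))^2)"
proof (cases "m < 0")
  case True
  have r: "0 \<le> (- m) ^ CARD('n) / (- m - t) ^ CARD('n)" using True t by simp
  have S: "(cmod (Sop g t f (b + g, m + t)))^2 = ((- m) ^ CARD('n) / (- m - t) ^ CARD('n))^2 * (cmod (f (b, m)))^2"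
    unfolding Sop_T[OF t] using True r by (simp only: if_True norm_mult norm_of_real abs_of_nonneg power_mult_distrib)
  show ?thesis
  proof -
    have A: "real (mi_fact (b + g)) * (2 / (- m - t)) ^ (mi_abs b + mi_abs g) * (- m - t) ^ (2 * CARD('n))
       * ((- m) ^ CARD('n) / (- m - t) ^ CARD('n)) ^ 2 * (cmod (f (b, m)))^2
     = (real (mi_fact (b + g)) / real (mi_fact b) * 2 ^ mi_abs g * (- m) ^ mi_abs b / (- m - t) ^ (mi_abs b + mi_abs g))
       * (real (mi_fact b) * (2 / - m) ^ mi_abs b * (- m) ^ (2 * CARD('n)) * (cmod (f (b, m)))^2)"
      by (rule alg1) (use True t mi_fact_pos[of b] in auto)
    show ?thesis
      unfolding S W1[OF True t] W_pos[OF True] Kf_def fst_conv snd_conv using True A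
      by (simp only: if_True mult.assoc)
  qed
next
  case False
  then show ?thesis using t by (simp add: Sop_T W_neg Kf_def)
qed

lemma Sadj_q:
  fixes b g :: "nat^'n"
  assumes m: "m < 0" and t: "t < 0"
  shows "Sadj g t h (b, m) = of_real (((- m - t) ^ CARD('n) / (- m - t) ^ (mi_abs b + mi_abs g))
      / ((- m) ^ CARD('n) / (- m) ^ mi_abs b) * (real (mi_fact (b + g)) / real (mi_fact b)) * 2 ^ mi_abs g)
      * h (b + g, m + t)"
proof -
  have e1: "\<bar>m + t\<bar> = - m - t" "\<bar>m\<bar> = - m" using m t by auto
  have p1: "(- m - t) powr (real CARD('n) - real (mi_abs b) - real (mi_abs g))
      = (- m - t) ^ CARD('n) / (- m - t) ^ (mi_abs b + mi_abs g)"
    using powr_nat_diff[of "- m - t" "CARD('n)" "mi_abs b + mi_abs g"] m t by (simp add: algebra_simps)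
  have p2: "(- m) powr (real CARD('n) - real (mi_abs b)) = (- m) ^ CARD('n) / (- m) ^ mi_abs b"
    using powr_nat_diff[of "- m" "CARD('n)" "mi_abs b"] m by simp
  show ?thesis
    by (simp only: Sadj_def prod.case e1 p1 p2)
qed

lemma pw3:
  fixes b g :: "nat^'n"
  assumes t: "t < 0"
  shows "mu_weight (b, m) * (cmod (Sadj g t h (b, m)))^2
       = Kf g t (b, m) * (mu_weight (b + g, m + t) * (cmod (h (b + g, m + t)))^2)"
proof (cases "m < 0")
  case True
  define c where "c = ((- m - t) ^ CARD('n) / (- m - t) ^ (mi_abs b + mi_abs g))
      / ((- m) ^ CARD('n) / (- m) ^ mi_abs b) * (real (mi_fact (b + g)) / real (mi_fact b)) * 2 ^ mi_abs g"
  have pos: "0 \<le> c"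
    using True t mi_fact_pos[of b] mi_fact_pos[of "b+g"] by (simp add: c_def)
  have S: "(cmod (Sadj g t h (b, m)))^2 = c^2 * (cmod (h (b + g, m + t)))^2"
    unfolding Sadj_q[OF True t] c_def[symmetric] using pos
    by (simp only: norm_mult norm_of_real abs_of_nonneg power_mult_distrib)
  show ?thesis
  proof -
    have A: "real (mi_fact b) * (2 / - m) ^ mi_abs b * (- m) ^ (2 * CARD('n))
       * (((- m - t) ^ CARD('n) / (- m - t) ^ (mi_abs b + mi_abs g))
      / ((- m) ^ CARD('n) / (- m) ^ mi_abs b) * (real (mi_fact (b + g)) / real (mi_fact b)) * 2 ^ mi_abs g) ^ 2
       * (cmod (h (b + g, m + t)))^2
     = (real (mi_fact (b + g)) / real (mi_fact b) * 2 ^ mi_abs g * (- m) ^ mi_abs b / (- m - t) ^ (mi_abs b + mi_abs g))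
       * (real (mi_fact (b + g)) * (2 / (- m - t)) ^ (mi_abs b + mi_abs g) * (- m - t) ^ (2 * CARD('n)) * (cmod (h (b + g, m + t)))^2)"
      by (rule alg3) (use True t mi_fact_pos[of b] in auto)
    show ?thesis
      unfolding S c_def W1[OF True t] W_pos[OF True] Kf_def fst_conv snd_conv using True A
      by (simp only: if_True mult.assoc)
  qed
next
  case False
  then show ?thesis using t by (simp add: W_neg Kf_def)
qed

lemma pw_inner:
  fixes b g :: "nat^'n"
  assumes t: "t < 0"
  shows "mu_weight (b + g, m + t) *\<^sub>R (Sop g t f (b + g, m + t) * cnj (h (b + g, m + t)))
       = mu_weight (b, m) *\<^sub>R (f (b, m) * cnj (Sadj g t h (b, m)))"
proof (cases "m < 0")
  case True
  define c where "c = ((- m - t) ^ CARD('n) / (- m - t) ^ (mi_abs b + mi_abs g))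
      / ((- m) ^ CARD('n) / (- m) ^ mi_abs b) * (real (mi_fact (b + g)) / real (mi_fact b)) * 2 ^ mi_abs g"
  define r where "r = (- m) ^ CARD('n) / (- m - t) ^ CARD('n)"
  have E: "mu_weight (b + g, m + t) * r = mu_weight (b, m) * c"
    unfolding W1[OF True t] W_pos[OF True] c_def r_def
    by (rule alg_inner) (use True t mi_fact_pos[of b] in auto)
  have "mu_weight (b + g, m + t) *\<^sub>R (Sop g t f (b + g, m + t) * cnj (h (b + g, m + t)))
     = of_real (mu_weight (b + g, m + t) * r) * (f (b, m) * cnj (h (b + g, m + t)))"
    unfolding Sop_T[OF t] r_def[symmetric] using True
    by (simp only: if_True scaleR_conv_of_real of_real_mult mult_ac)
  also have "\<dots> = mu_weight (b, m) *\<^sub>R (f (b, m) * cnj (Sadj g t h (b, m)))"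
    unfolding E Sadj_q[OF True t] c_def[symmetric]
    by (simp only: scaleR_conv_of_real of_real_mult mult_ac complex_cnj_mult complex_cnj_complex_of_real)
  finally show ?thesis .
next
  case False
  then show ?thesis using t by (simp add: Sop_T W_neg)
qed

definition Phi :: "((nat^'n) \<times> real \<Rightarrow> complex) \<Rightarrow> complex^'n \<Rightarrow> complex \<Rightarrow> (nat^'n) \<times> real \<Rightarrow> complex" where
  "Phi F z w = (\<lambda>p. case p of (a, l) \<Rightarrow>
        (if l < 0 then mi_pow z a * exp (- \<i> * of_real l * w) * cnj (F (a, l)) * of_real (\<bar>l\<bar> ^ CARD('n))
         else 0))"

lemma scrS_Phi: fixes F :: "(nat^'n) \<times> real \<Rightarrow> complex" shows "scrS F (z, w) = (2 * pi) powr (- real CARD('n) - 1) * integral\<^sup>L base_measure (Phi F z w)"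
  by (simp add: scrS_def Phi_def)

lemma pw_scrS:
  fixes b g :: "nat^'n"
  assumes t: "t < 0"
  shows "Phi (Sop g t f) z w (b + g, m + t) = (mi_pow z g * exp (- \<i> * of_real t * w)) * Phi f z w (b, m)"
proof (cases "m < 0")
  case True
  have ex: "exp (- \<i> * of_real (m + t) * w) = exp (- \<i> * of_real m * w) * exp (- \<i> * of_real t * w)"
    by (simp add: exp_add[symmetric] algebra_simps)
  have y: "\<bar>m + t\<bar> = - m - t" "\<bar>m\<bar> = - m" using True t by auto
  have r: "(- m) ^ CARD('n) / (- m - t) ^ CARD('n) * (- m - t) ^ CARD('n) = (- m) ^ CARD('n)"
    using True t by simp
  have r': "complex_of_real ((- m) ^ CARD('n) / (- m - t) ^ CARD('n)) * complex_of_real ((- m - t) ^ CARD('n))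
     = complex_of_real ((- m) ^ CARD('n))"
    by (simp only: of_real_mult[symmetric] r)
  have "Phi (Sop g t f) z w (b + g, m + t) = mi_pow z b * mi_pow z g * (exp (- \<i> * of_real m * w) * exp (- \<i> * of_real t * w))
     * cnj (f (b, m)) * of_real ((- m) ^ CARD('n) / (- m - t) ^ CARD('n) * (- m - t) ^ CARD('n))"
    using True t unfolding Phi_def ex[symmetric]
    by (simp add: Sop_T y mi_pow_add r' del: of_real_mult of_real_divide of_real_power)
  also have "\<dots> = (mi_pow z g * exp (- \<i> * of_real t * w)) * Phi f z w (b, m)"
    unfolding r using True by (simp add: Phi_def y r' del: of_real_mult of_real_divide of_real_power)
  finally show ?thesis .
next
  case False
  then show ?thesis using t by (simp add: Sop_T Phi_def)
qed

lemma Sop_meas: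
  fixes f :: "(nat^'n) \<times> real \<Rightarrow> complex"
  assumes f: "f \<in> borel_measurable base_measure"
  shows "Sop g t f \<in> borel_measurable base_measure"
proof -
  define c1 :: "(nat^'n) \<times> real \<Rightarrow> complex" where
    "c1 p = (if snd p < t \<and> mi_le g (fst p) then of_real (\<bar>snd p - t\<bar> ^ CARD('n) / \<bar>snd p\<bar> ^ CARD('n)) else 0)" for p
  have c1m: "c1 \<in> borel_measurable base_measure"
    by (rule meas_base, unfold c1_def fst_conv snd_conv, measurable)
  have fm: "(\<lambda>p. f (fst p - g, snd p + (- t))) \<in> borel_measurable base_measure"
    using measurable_comp[OF base_meas_map[of "\<lambda>a. a - g" "- t"] f] by (simp add: o_def)
  have "Sop g t f = (\<lambda>p. c1 p * f (fst p - g, snd p + (- t)))"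
    by (auto simp: Sop_def c1_def fun_eq_iff)
  then show ?thesis using c1m fm by simp
qed

lemma Sadj_meas:
  fixes h :: "(nat^'n) \<times> real \<Rightarrow> complex"
  assumes h: "h \<in> borel_measurable base_measure"
  shows "Sadj g t h \<in> borel_measurable base_measure"
proof -
  define c2 :: "(nat^'n) \<times> real \<Rightarrow> complex" where
    "c2 p = of_real (\<bar>snd p + t\<bar> powr (real CARD('n) - real (mi_abs (fst p)) - real (mi_abs g))
               / \<bar>snd p\<bar> powr (real CARD('n) - real (mi_abs (fst p)))
               * (real (mi_fact (fst p + g)) / real (mi_fact (fst p))) * 2 ^ mi_abs g)" for p
  have c2m: "c2 \<in> borel_measurable base_measure"
    by (rule meas_base, unfold c2_def fst_conv snd_conv, measurable)
  have hm: "(\<lambda>p. h (fst p + g, snd p + t)) \<in> borel_measurable base_measure"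
    using measurable_comp[OF base_meas_map[of "\<lambda>a. a + g" "t"] h] by (simp add: o_def)
  have "Sadj g t h = (\<lambda>p. c2 p * h (fst p + g, snd p + t))"
    by (auto simp: Sadj_def c2_def fun_eq_iff)
  then show ?thesis using c2m hm by simp
qed

lemma Phi_meas:
  fixes F :: "(nat^'n) \<times> real \<Rightarrow> complex"
  assumes F: "F \<in> borel_measurable base_measure"
  shows "Phi F z w \<in> borel_measurable base_measure"
proof -
  define c3 :: "(nat^'n) \<times> real \<Rightarrow> complex" where
    "c3 p = (if snd p < 0 then mi_pow z (fst p) * exp (- \<i> * of_real (snd p) * w) * of_real (\<bar>snd p\<bar> ^ CARD('n)) else 0)" for p
  have c3m: "c3 \<in> borel_measurable base_measure"
    by (rule meas_base, unfold c3_def fst_conv snd_conv, measurable)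
  have eq: "Phi F z w = (\<lambda>p. c3 p * cnj (F p))"
    by (auto simp: Phi_def c3_def fun_eq_iff)
  have cF: "(\<lambda>x. cnj (F x)) \<in> borel_measurable base_measure"
    by (rule borel_measurable_continuous_on[OF _ F]) (rule linear_continuous_on[OF bounded_linear_cnj])
  show ?thesis unfolding eq using c3m cF by measurable
qed

lemma Kf_int:
  fixes H :: "(nat^'n) \<times> real \<Rightarrow> real"
  assumes t: "t < 0" and H: "integrable base_measure H" and Hnn: "\<And>p. 0 \<le> H p"
  shows "integrable base_measure (\<lambda>q. Kf g t q * H q)"
    and "integral\<^sup>L base_measure (\<lambda>q. Kf g t q * H q) \<le> (2 ^ mi_abs g * real (mi_fact g) / (- t) ^ mi_abs g) * integral\<^sup>L base_measure H"
proof -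
  let ?C = "2 ^ mi_abs g * real (mi_fact g) / (- t) ^ mi_abs g"
  have Hm: "H \<in> borel_measurable base_measure" using H by auto
  have I2: "integrable base_measure (\<lambda>q. ?C * H q)" using H by simp
  show I1: "integrable base_measure (\<lambda>q. Kf g t q * H q)"
  proof (rule Bochner_Integration.integrable_bound[OF I2])
    show "(\<lambda>q. Kf g t q * H q) \<in> borel_measurable base_measure" using Kf_meas Hm by measurable
    show "AE x in base_measure. norm (Kf g t x * H x) \<le> norm (?C * H x)"
    proof (rule AE_I2)
      fix x
      have "norm (Kf g t x * H x) = Kf g t x * H x" using Kf_bounds(1)[OF t, of g x] Hnn[of x] by simp
      also have "\<dots> \<le> ?C * H x" by (rule mult_right_mono[OF Kf_bounds(2)[OF t] Hnn])
      also have "\<dots> = norm (?C * H x)" using Hnn[of x] t by (simp add: abs_mult power_abs)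
      finally show "norm (Kf g t x * H x) \<le> norm (?C * H x)" .
    qed
  qed
  have "integral\<^sup>L base_measure (\<lambda>q. Kf g t q * H q) \<le> integral\<^sup>L base_measure (\<lambda>q. ?C * H q)"
    by (rule integral_mono[OF I1 I2]) (rule mult_right_mono[OF Kf_bounds(2)[OF t] Hnn])
  then show "integral\<^sup>L base_measure (\<lambda>q. Kf g t q * H q) \<le> ?C * integral\<^sup>L base_measure H" by simp
qed



lemma L2D:
  fixes f :: "(nat^'n) \<times> real \<Rightarrow> complex"
  assumes "f \<in> L2mu"
  shows "f \<in> borel_measurable base_measure"
    and "integrable base_measure (\<lambda>p. mu_weight p * (cmod (f p))^2)"
    and "integral\<^sup>L mu (\<lambda>p. (cmod (f p))^2) = integral\<^sup>L base_measure (\<lambda>p. mu_weight p * (cmod (f p))^2)"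
proof -
  show fm: "f \<in> borel_measurable base_measure" using assms by (simp add: L2mu_def meas_mu)
  have m2: "(\<lambda>p. (cmod (f p))^2) \<in> borel_measurable base_measure" using fm by measurable
  show "integrable base_measure (\<lambda>p. mu_weight p * (cmod (f p))^2)"
    using assms mu_facts(2)[OF m2] by (simp add: L2mu_def)
  show "integral\<^sup>L mu (\<lambda>p. (cmod (f p))^2) = integral\<^sup>L base_measure (\<lambda>p. mu_weight p * (cmod (f p))^2)"
    using mu_facts(1)[OF m2] by simp
qed

lemma L2I:
  fixes f :: "(nat^'n) \<times> real \<Rightarrow> complex"
  assumes fm: "f \<in> borel_measurable base_measure"
    and I: "integrable base_measure (\<lambda>p. mu_weight p * (cmod (f p))^2)"
  shows "f \<in> L2mu"
proof -
  have m2: "(\<lambda>p. (cmod (f p))^2) \<in> borel_measurable base_measure" using fm by measurable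
  show ?thesis using fm I mu_facts(2)[OF m2] by (simp add: L2mu_def meas_mu)
qed

lemma zero_out:
  fixes g :: "nat^'n"
  shows "\<not> mi_le g (fst p) \<Longrightarrow> Sop g t f p = 0"
  by (cases p) (simp add: Sop_def)

lemma ind_id:
  fixes g :: "nat^'n" and G :: "(nat^'n) \<times> real \<Rightarrow> 'b::real_vector"
  assumes "\<And>p. \<not> mi_le g (fst p) \<Longrightarrow> G p = 0"
  shows "(\<lambda>p. indicator {p. mi_le g (fst p)} p *\<^sub>R G p) = G"
  using assms by (auto simp: fun_eq_iff indicator_def)

theorem theorem1p5:
  fixes g :: "nat^'n" and t :: real
  assumes "t < 0"
  shows "(\<exists>C. \<forall>f\<in>L2mu. Sop g t f \<in> L2mu \<and> L2norm (Sop g t f) \<le> C * L2norm f)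
    \<and> (\<forall>f\<in>L2mu. \<forall>(z, w)\<in>siegel.
          scrS (Sop g t f) (z, w) = mi_pow z g * exp (- \<i> * of_real t * w) * scrS f (z, w))
    \<and> (\<forall>f\<in>L2mu. \<forall>h\<in>L2mu. Sadj g t h \<in> L2mu \<and>
          L2inner (Sop g t f) h = L2inner f (Sadj g t h))"
proof -
  note t = assms
  define C0 where "C0 = 2 ^ mi_abs g * real (mi_fact g) / (- t) ^ mi_abs g"
  have C0: "0 \<le> C0" using t by (simp add: C0_def)
  have P1: "Sop g t f \<in> L2mu \<and> L2norm (Sop g t f) \<le> sqrt C0 * L2norm f" if f: "f \<in> L2mu" for f
  proof -
    note fm = L2D(1)[OF f] and fI = L2D(2)[OF f]
    define G where "G p = mu_weight p * (cmod (Sop g t f p))^2" for p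
    have Sm: "Sop g t f \<in> borel_measurable base_measure" by (rule Sop_meas[OF fm])
    have Gm: "G \<in> borel_measurable base_measure" unfolding G_def using Sm W_meas by measurable
    have GR: "(\<lambda>p. indicator {p. mi_le g (fst p)} p *\<^sub>R G p) = G"
      by (rule ind_id) (simp add: G_def zero_out)
    have GT: "(\<lambda>q. G (fst q + g, snd q + t)) = (\<lambda>q. Kf g t q * (mu_weight q * (cmod (f q))^2))"
    proof
      fix q :: "(nat^'n) \<times> real"
      obtain b m where q: "q = (b, m)" by (cases q)
      show "G (fst q + g, snd q + t) = Kf g t q * (mu_weight q * (cmod (f q))^2)"
        unfolding q G_def fst_conv snd_conv by (rule pw1[OF t])
    qed
    have nn: "\<And>p. 0 \<le> mu_weight p * (cmod (f p))^2" by (simp add: W_nonneg)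
    have IT: "integrable base_measure (\<lambda>q. G (fst q + g, snd q + t))"
      unfolding GT by (rule Kf_int(1)[OF t fI nn])
    have IG: "integrable base_measure G" using IT int_T(2)[OF Gm, of g t] GR by simp
    have "integral\<^sup>L base_measure G = integral\<^sup>L base_measure (\<lambda>q. G (fst q + g, snd q + t))"
      using int_T(1)[OF Gm, of g t] GR by simp
    also have "\<dots> \<le> C0 * integral\<^sup>L base_measure (\<lambda>p. mu_weight p * (cmod (f p))^2)"
      unfolding GT C0_def by (rule Kf_int(2)[OF t fI nn])
    finally have le: "integral\<^sup>L base_measure G \<le> C0 * integral\<^sup>L base_measure (\<lambda>p. mu_weight p * (cmod (f p))^2)" .
    have SL: "Sop g t f \<in> L2mu" using L2I[OF Sm] IG unfolding G_def[abs_def] by simp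
    have "L2norm (Sop g t f) = sqrt (integral\<^sup>L base_measure G)"
      unfolding L2norm_def L2D(3)[OF SL] G_def ..
    also have "\<dots> \<le> sqrt (C0 * integral\<^sup>L base_measure (\<lambda>p. mu_weight p * (cmod (f p))^2))"
      using le by simp
    also have "\<dots> = sqrt C0 * L2norm f"
      unfolding L2norm_def L2D(3)[OF f] by (simp add: real_sqrt_mult)
    finally show ?thesis using SL by simp
  qed
  have P2: "scrS (Sop g t f) (z, w) = mi_pow z g * exp (- \<i> * of_real t * w) * scrS f (z, w)"
    if f: "f \<in> L2mu" for f z w
  proof -
    note fm = L2D(1)[OF f]
    have Pm: "Phi (Sop g t f) z w \<in> borel_measurable base_measure" by (rule Phi_meas[OF Sop_meas[OF fm]])
    have PR: "(\<lambda>p. indicator {p. mi_le g (fst p)} p *\<^sub>R Phi (Sop g t f) z w p) = Phi (Sop g t f) z w"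
      by (rule ind_id) (auto simp: Phi_def zero_out split: prod.splits)
    have PT: "(\<lambda>q. Phi (Sop g t f) z w (fst q + g, snd q + t)) = (\<lambda>q. (mi_pow z g * exp (- \<i> * of_real t * w)) * Phi f z w q)"
    proof
      fix q :: "(nat^'n) \<times> real"
      obtain b m where q: "q = (b, m)" by (cases q)
      show "Phi (Sop g t f) z w (fst q + g, snd q + t) = (mi_pow z g * exp (- \<i> * of_real t * w)) * Phi f z w q"
        unfolding q fst_conv snd_conv by (rule pw_scrS[OF t])
    qed
    have "integral\<^sup>L base_measure (Phi (Sop g t f) z w) = (mi_pow z g * exp (- \<i> * of_real t * w)) * integral\<^sup>L base_measure (Phi f z w)"
      using int_T(1)[OF Pm, of g t] PR PT by simp
    then show ?thesis unfolding scrS_Phi by (simp add: mult_ac)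
  qed
  have P3: "Sadj g t h \<in> L2mu \<and> L2inner (Sop g t f) h = L2inner f (Sadj g t h)"
    if f: "f \<in> L2mu" and h: "h \<in> L2mu" for f h
  proof -
    note fm = L2D(1)[OF f] and hm = L2D(1)[OF h] and hI = L2D(2)[OF h]
    define H where "H p = mu_weight p * (cmod (h p))^2" for p
    have Hm: "H \<in> borel_measurable base_measure" unfolding H_def using hm W_meas by measurable
    have IHR: "integrable base_measure (\<lambda>p. indicator {p. mi_le g (fst p)} p *\<^sub>R H p)"
      by (rule integrable_mult_indicator[OF R_sets]) (use hI in \<open>simp add: H_def\<close>)
    have IHT: "integrable base_measure (\<lambda>q. H (fst q + g, snd q + t))"
      using int_T(2)[OF Hm, of g t] IHR by simp
    have Am: "Sadj g t h \<in> borel_measurable base_measure" by (rule Sadj_meas[OF hm])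
    have AT: "(\<lambda>q. mu_weight q * (cmod (Sadj g t h q))^2) = (\<lambda>q. Kf g t q * H (fst q + g, snd q + t))"
    proof
      fix q :: "(nat^'n) \<times> real"
      obtain b m where q: "q = (b, m)" by (cases q)
      show "mu_weight q * (cmod (Sadj g t h q))^2 = Kf g t q * H (fst q + g, snd q + t)"
        unfolding q H_def fst_conv snd_conv by (rule pw3[OF t])
    qed
    have nn: "\<And>q. 0 \<le> H (fst q + g, snd q + t)" by (simp add: H_def W_nonneg)
    have AL: "Sadj g t h \<in> L2mu"
      by (rule L2I[OF Am]) (unfold AT, rule Kf_int(1)[OF t IHT nn])
    define P where "P p = mu_weight p *\<^sub>R (Sop g t f p * cnj (h p))" for p
    have Sm: "Sop g t f \<in> borel_measurable base_measure" by (rule Sop_meas[OF fm])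
    have cm: "(\<lambda>x. cnj (h x)) \<in> borel_measurable base_measure"
      by (rule borel_measurable_continuous_on[OF _ hm]) (rule linear_continuous_on[OF bounded_linear_cnj])
    have cm2: "(\<lambda>x. cnj (Sadj g t h x)) \<in> borel_measurable base_measure"
      by (rule borel_measurable_continuous_on[OF _ Am]) (rule linear_continuous_on[OF bounded_linear_cnj])
    have m1: "(\<lambda>p. Sop g t f p * cnj (h p)) \<in> borel_measurable base_measure" using Sm cm by measurable
    have m2: "(\<lambda>p. f p * cnj (Sadj g t h p)) \<in> borel_measurable base_measure" using fm cm2 by measurable
    have Pm: "P \<in> borel_measurable base_measure" unfolding P_def using m1 W_meas by measurable
    have PR: "(\<lambda>p. indicator {p. mi_le g (fst p)} p *\<^sub>R P p) = P"
      by (rule ind_id) (simp add: P_def zero_out)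
    have PT: "(\<lambda>q. P (fst q + g, snd q + t)) = (\<lambda>q. mu_weight q *\<^sub>R (f q * cnj (Sadj g t h q)))"
    proof
      fix q :: "(nat^'n) \<times> real"
      obtain b m where q: "q = (b, m)" by (cases q)
      show "P (fst q + g, snd q + t) = mu_weight q *\<^sub>R (f q * cnj (Sadj g t h q))"
        unfolding q P_def fst_conv snd_conv by (rule pw_inner[OF t])
    qed
    have "L2inner (Sop g t f) h = integral\<^sup>L base_measure P"
      unfolding L2inner_def P_def by (rule mu_facts(1)[OF m1])
    also have "\<dots> = integral\<^sup>L base_measure (\<lambda>q. P (fst q + g, snd q + t))"
      using int_T(1)[OF Pm, of g t] PR by simp
    also have "\<dots> = L2inner f (Sadj g t h)"
      unfolding PT L2inner_def by (rule mu_facts(1)[OF m2, symmetric])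
    finally show ?thesis using AL by simp
  qed
  show ?thesis
    using P1 P2 P3 by blast
qed

end
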